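(* Let $(\Omega, \Sigma, \mu, S)$ be a dynamical system which is asymptotically stationary. Let $\Pi \subset \Sigma$ be a $\pi$-system such that $\sigma(\Pi) = \Sigma$ and $$\lim_{k \to \infty} \sup_{i \in \mathbb{N}} \left|\mu(S^{-i}A \cap S^{-k}S^{-i}B) - \mu(S^{-i}A)\,\mu(S^{-k}S^{-i}B)\right| = 0$$ for all $A, B \in \Pi$. Then this limit relation holds for all $A, B \in \Sigma$.
   Context: A dynamical system $(\Omega,\Sigma,\mu,S)$ consists of a probability space $(\Omega,\Sigma,\mu)$ and a measurable map $S:\Omega\to\Omega$; $S^k$ denotes the $k$-fold composition and $S^{-k}A=(S^k)^{-1}(A)$. It is asymptotically stationary (with stationary limit $\nu$) if $\nu(A)=\lim_{k\to\infty}\mu(S^{-k}A)$ exists for every $A\in\Sigma$. $\mathbb{N}=\{1,2,\dots\}$. $\sigma(\Pi)$ is the $\sigma$-algebra generated by $\Pi$. *)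

theory Defs
  imports "HOL-Probability.Probability"
begin

definition preim :: "'a measure \<Rightarrow> ('a \<Rightarrow> 'a) \<Rightarrow> nat \<Rightarrow> 'a set \<Rightarrow> 'a set" where
  "preim M S k A = (S ^^ k) -` A \<inter> space M"

definition asymptotically_stationary :: "'a measure \<Rightarrow> ('a \<Rightarrow> 'a) \<Rightarrow> bool" where
  "asymptotically_stationary M S \<longleftrightarrow>
     (\<forall>A\<in>sets M. convergent (\<lambda>k. measure M (preim M S k A)))"

definition mix_rel :: "'a measure \<Rightarrow> ('a \<Rightarrow> 'a) \<Rightarrow> 'a set \<Rightarrow> 'a set \<Rightarrow> bool" where
  "mix_rel M S A B \<longleftrightarrow>
     (\<lambda>k. SUP i\<in>{1..}. \<bar>measure M (preim M S i A \<inter> preim M S k (preim M S i B))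
                       - measure M (preim M S i A) * measure M (preim M S k (preim M S i B))\<bar>)
     \<longlonglongrightarrow> 0"

end

theory Submission
  imports Defs
begin


locale dynsys = prob_space M for M :: "'a measure" +
  fixes S :: "'a \<Rightarrow> 'a"
  assumes S_meas: "S \<in> M \<rightarrow>\<^sub>M M"
begin

abbreviation "pr n X \<equiv> preim M S n X"

lemma funpow_meas: "(S ^^ n) \<in> M \<rightarrow>\<^sub>M M"
  by (induction n) (auto intro: measurable_compose[OF _ S_meas])

lemma funpow_space: "x \<in> space M \<Longrightarrow> (S ^^ n) x \<in> space M"
  using measurable_space[OF funpow_meas] by blast

lemma pr_sets[intro]: "X \<in> sets M \<Longrightarrow> pr n X \<in> sets M"
  unfolding preim_def using funpow_meas measurable_sets by blast

lemma pr_Un: "pr n (X \<union> Y) = pr n X \<union> pr n Y" by (auto simp: preim_def)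
lemma pr_Int: "pr n (X \<inter> Y) = pr n X \<inter> pr n Y" by (auto simp: preim_def)
lemma pr_Diff: "pr n (X - Y) = pr n X - pr n Y" by (auto simp: preim_def)
lemma pr_mono: "X \<subseteq> Y \<Longrightarrow> pr n X \<subseteq> pr n Y" by (auto simp: preim_def)
lemma pr_empty[simp]: "pr n {} = {}" by (auto simp: preim_def)
lemma pr_compl: "pr n (space M - X) = space M - pr n X"
  using funpow_space by (auto simp: preim_def)
lemma pr_pr: "pr k (pr i B) = pr (i + k) B"
  using funpow_space by (auto simp: preim_def funpow_add)
lemma pr_Inter: "pr n (\<Inter>N. C N) = (\<Inter>N. pr n (C N))" by (auto simp: preim_def)

definition mu :: "nat \<Rightarrow> 'a set \<Rightarrow> real" where "mu n X = prob (pr n X)"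

lemma mu_nonneg: "0 \<le> mu n X" by (simp add: mu_def)
lemma mu_le1: "mu n X \<le> 1" by (simp add: mu_def)
lemma mu_mono: "X \<subseteq> Y \<Longrightarrow> Y \<in> sets M \<Longrightarrow> mu n X \<le> mu n Y"
  unfolding mu_def by (intro finite_measure_mono pr_mono pr_sets)
lemma mu_Un: "X \<in> sets M \<Longrightarrow> Y \<in> sets M \<Longrightarrow> X \<inter> Y = {} \<Longrightarrow> mu n (X \<union> Y) = mu n X + mu n Y"
  unfolding mu_def pr_Un by (intro finite_measure_Union pr_sets) (auto simp: preim_def)
lemma mu_Un_le: "X \<in> sets M \<Longrightarrow> Y \<in> sets M \<Longrightarrow> mu n (X \<union> Y) \<le> mu n X + mu n Y"
  unfolding mu_def pr_Un by (intro measure_Un_le pr_sets) auto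
lemma mu_Diff: "X \<in> sets M \<Longrightarrow> Y \<in> sets M \<Longrightarrow> Y \<subseteq> X \<Longrightarrow> mu n (X - Y) = mu n X - mu n Y"
  unfolding mu_def pr_Diff by (intro finite_measure_Diff pr_sets pr_mono) auto

lemma mu_decseq:
  assumes "\<And>N. C N \<in> sets M" "decseq C" "(\<Inter>N. C N) = {}"
  shows "(\<lambda>N. mu n (C N)) \<longlonglongrightarrow> 0"
proof -
  have "(\<lambda>N. prob (pr n (C N))) \<longlonglongrightarrow> prob (\<Inter>N. pr n (C N))"
    using assms by (intro finite_Lim_measure_decseq) (auto simp: decseq_def intro!: pr_mono)
  then show ?thesis using assms(3) by (simp add: mu_def pr_Inter[symmetric])
qed

end


context dynsys begin

lemma uca:
  assumes conv: "\<And>X. X \<in> sets M \<Longrightarrow> convergent (\<lambda>n. mu n X)"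
    and C: "\<And>N. C N \<in> sets M" "decseq C" "(\<Inter>N. C N) = {}" and e: "e > 0"
  shows "\<exists>N. \<forall>n. mu n (C N) \<le> e"
proof (rule ccontr)
  assume "\<not> ?thesis"
  then have hump: "\<And>N. \<exists>n. mu n (C N) > e" by (auto simp: not_le)
  define nu where "nu X = lim (\<lambda>n. mu n X)" for X
  have nu: "(\<lambda>n. mu n X) \<longlonglongrightarrow> nu X" if "X \<in> sets M" for X
    using conv[OF that] unfolding nu_def by (simp add: convergent_LIMSEQ_iff)
  have nu_mono: "nu X \<le> nu Y" if "X \<subseteq> Y" "X \<in> sets M" "Y \<in> sets M" for X Y
    by (rule LIMSEQ_le[OF nu[OF that(2)] nu[OF that(3)]]) (use that mu_mono in auto)
  have nu_le1: "nu X \<le> 1" if "X \<in> sets M" for X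
    by (rule LIMSEQ_le_const2[OF nu[OF that]]) (use mu_le1 in auto)
  have F2: "\<exists>N\<ge>N0. \<exists>n\<ge>n0. mu n (C N) > e" for N0 n0
  proof -
    have "eventually (\<lambda>N. \<forall>n\<in>{..<n0}. mu n (C N) < e) sequentially"
      using mu_decseq[OF C] e by (intro eventually_ball_finite) (auto dest: order_tendstoD(2))
    then obtain N where N: "N \<ge> N0" "\<forall>n<n0. mu n (C N) < e"
      by (metis (no_types, lifting) eventually_at_top_linorder lessThan_iff nat_le_linear)
    from hump[of N] obtain n where "mu n (C N) > e" by blast
    with N show ?thesis by (metis not_le not_less_iff_gr_or_eq)
  qed
  define Q where "Q n0 N0 Fp t \<longleftrightarrow> (case t of (n, a, b) \<Rightarrow>
      n \<ge> n0 \<and> a \<ge> N0 \<and> a < b \<and> mu n (C a - C b) > e/2 \<and> mu n (C b) \<le> e/8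
      \<and> \<bar>mu n Fp - nu Fp\<bar> \<le> e/16)" for n0 N0 :: nat and Fp t
  have ex: "\<exists>t. Q n0 N0 Fp t" if Fp: "Fp \<in> sets M" for n0 N0 Fp
  proof -
    from nu[OF Fp] e obtain n1 where n1: "\<forall>n\<ge>n1. \<bar>mu n Fp - nu Fp\<bar> < e/16"
      unfolding LIMSEQ_iff by (metis real_norm_def divide_pos_pos zero_less_numeral)
    from F2[of N0 "max n0 n1"] obtain a n where an: "a \<ge> N0" "n \<ge> max n0 n1" "mu n (C a) > e"
      by blast
    have "eventually (\<lambda>b. mu n (C b) < e/8) sequentially"
      using mu_decseq[OF C, of n] e by (intro order_tendstoD(2)) auto
    then obtain b where b: "b \<ge> Suc a" "mu n (C b) < e/8"
      by (metis eventually_at_top_linorder nat_le_linear)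
    have sub: "C b \<subseteq> C a" using C(2) b(1) by (simp add: decseq_def)
    have "mu n (C a - C b) = mu n (C a) - mu n (C b)" by (rule mu_Diff[OF C(1) C(1) sub])
    with an b e have "mu n (C a - C b) > e/2" by linarith
    then have "Q n0 N0 Fp (n, a, b)" unfolding Q_def using an b n1 by auto
    then show ?thesis by blast
  qed
  define ch where "ch n0 N0 Fp = (SOME t. Q n0 N0 Fp t)" for n0 N0 Fp
  have chQ: "Q n0 N0 Fp (ch n0 N0 Fp)" if "Fp \<in> sets M" for n0 N0 Fp
    unfolding ch_def using ex[OF that] by (rule someI_ex)
  define T where "T = rec_nat (ch 0 0 {}, {})
     (\<lambda>j (t, Fp). (let F' = (if even j then Fp \<union> (C (fst (snd t)) - C (snd (snd t))) else Fp)
                    in (ch (Suc (fst t)) (snd (snd t)) F', F')))"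
  define nn where "nn j = fst (fst (T j))" for j
  define aa where "aa j = fst (snd (fst (T j)))" for j
  define bb where "bb j = snd (snd (fst (T j)))" for j
  define Fs where "Fs j = snd (T j)" for j
  define E where "E j = C (aa j) - C (bb j)" for j
  have T0: "fst (T 0) = ch 0 0 {}" "Fs 0 = {}" by (simp_all add: T_def Fs_def)
  have TS: "Fs (Suc j) = (if even j then Fs j \<union> E j else Fs j)"
           "fst (T (Suc j)) = ch (Suc (nn j)) (bb j) (Fs (Suc j))" for j
    by (simp_all add: T_def Fs_def E_def nn_def aa_def bb_def Let_def split_beta)
  have E_sets: "E j \<in> sets M" for j unfolding E_def using C(1) by blast
  have Fs_sets: "Fs j \<in> sets M" for j
    by (induction j) (auto simp: T0 TS E_sets)
  have QT: "Q (if j = 0 then 0 else Suc (nn (j - 1))) (if j = 0 then 0 else bb (j - 1)) (Fs j) (fst (T j))" for j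
  proof (cases j)
    case 0 then show ?thesis using chQ[OF Fs_sets[of 0], of 0 0] by (simp add: T0)
  next
    case (Suc i)
    have "Q (Suc (nn i)) (bb i) (Fs (Suc i)) (fst (T (Suc i)))"
      unfolding TS(2)[of i] by (rule chQ[OF Fs_sets])
    then show ?thesis using Suc by simp
  qed
  have P: "aa j < bb j" "mu (nn j) (E j) > e/2" "mu (nn j) (C (bb j)) \<le> e/8"
      "\<bar>mu (nn j) (Fs j) - nu (Fs j)\<bar> \<le> e/16" for j
    using QT[of j] by (auto simp: Q_def E_def nn_def aa_def bb_def split: prod.splits)
  have PS: "nn (Suc j) > nn j" "aa (Suc j) \<ge> bb j" for j
    using QT[of "Suc j"] by (auto simp: Q_def nn_def aa_def bb_def split: prod.splits)
  have sm: "strict_mono nn" using PS(1) by (simp add: strict_mono_Suc_iff)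
  have amono: "incseq aa" using P(1) PS(2) by (intro incseq_SucI) (meson less_imp_le order_trans)
  have ba: "bb l \<le> aa j" if "l < j" for l j
    using PS(2)[of l] incseqD[OF amono, of "Suc l" j] that by simp
  define G where "G l = (if even l then E l else {})" for l
  define F where "F = (\<Union>l. G l)"
  have F_sets: "F \<in> sets M" unfolding F_def G_def using E_sets by auto
  have Fs_eq: "Fs j = (\<Union>l\<in>{..<j}. G l)" for j
  proof (induction j)
    case 0 then show ?case by (simp add: T0)
  next
    case (Suc j)
    have "Fs (Suc j) = Fs j \<union> G j" by (simp add: TS G_def)
    then show ?case using Suc by (simp add: lessThan_Suc Un_commute)
  qed
  have Cmono: "C y \<subseteq> C x" if "x \<le> y" for x y using C(2) that by (simp add: decseq_def)
  have disj: "Fs j \<inter> E j = {}" for j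
  proof -
    have "G l \<inter> C (aa j) = {}" if "l < j" for l
      using Cmono[OF ba[OF that]] by (auto simp: G_def E_def)
    moreover have "E j \<subseteq> C (aa j)" by (auto simp: E_def)
    ultimately show ?thesis unfolding Fs_eq by blast
  qed
  have even_ge: "mu (nn j) F > nu (Fs j) + 7*e/16" if "even j" for j
  proof -
    have "Fs j \<union> E j \<subseteq> F" unfolding Fs_eq F_def using that by (auto simp: G_def)
    then have "mu (nn j) (Fs j \<union> E j) \<le> mu (nn j) F" using F_sets mu_mono by blast
    moreover have "mu (nn j) (Fs j \<union> E j) = mu (nn j) (Fs j) + mu (nn j) (E j)"
      using mu_Un[OF Fs_sets E_sets disj] .
    ultimately show ?thesis using P[of j] by linarith
  qed
  have odd_le: "mu (nn j) F \<le> nu (Fs j) + 3*e/16" if "odd j" for j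
  proof -
    have "G l \<subseteq> C (bb j)" if "l > j" for l
    proof -
      have "bb j \<le> aa l" using ba[OF that] .
      then show ?thesis using Cmono by (auto simp: G_def E_def)
    qed
    have "F \<subseteq> Fs j \<union> C (bb j)"
    proof
      fix x assume "x \<in> F"
      then obtain l where l: "x \<in> G l" unfolding F_def by blast
      consider "l < j" | "l = j" | "l > j" by linarith
      then show "x \<in> Fs j \<union> C (bb j)"
      proof cases
        case 1 then show ?thesis using l unfolding Fs_eq by blast
      next
        case 2 then show ?thesis using l \<open>odd j\<close> by (simp add: G_def)
      next
        case 3 then show ?thesis using l \<open>\<And>l. l > j \<Longrightarrow> G l \<subseteq> C (bb j)\<close> by blast
      qed
    qed
    then have "mu (nn j) F \<le> mu (nn j) (Fs j \<union> C (bb j))" using Fs_sets C(1) mu_mono by blast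
    also have "\<dots> \<le> mu (nn j) (Fs j) + mu (nn j) (C (bb j))" using Fs_sets C(1) mu_Un_le by blast
    finally show ?thesis using P[of j] by linarith
  qed
  have Fsub: "Fs j \<subseteq> Fs (Suc j)" for j by (simp add: TS)
  have inc: "incseq (\<lambda>j. nu (Fs j))"
    by (rule incseq_SucI, rule nu_mono[OF Fsub Fs_sets Fs_sets])
  have bnd: "\<forall>i. nu (Fs i) \<le> 1" using nu_le1[OF Fs_sets] by blast
  obtain s where s: "(\<lambda>j. nu (Fs j)) \<longlonglongrightarrow> s" "\<forall>i. nu (Fs i) \<le> s"
    by (rule incseq_convergent[OF inc bnd])
  obtain L where L: "(\<lambda>n. mu n F) \<longlonglongrightarrow> L" using conv[OF F_sets] by (auto simp: convergent_def)
  have L2: "(\<lambda>j. mu (nn j) F) \<longlonglongrightarrow> L" using LIMSEQ_subseq_LIMSEQ[OF L sm] by (simp add: comp_def)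
  have sm2: "strict_mono (\<lambda>j::nat. 2*j)" "strict_mono (\<lambda>j::nat. 2*j+1)" by (auto intro: strict_monoI)
  have L_e: "(\<lambda>j. mu (nn (2*j)) F) \<longlonglongrightarrow> L" "(\<lambda>j. mu (nn (2*j+1)) F) \<longlonglongrightarrow> L"
    using LIMSEQ_subseq_LIMSEQ[OF L2 sm2(1)] LIMSEQ_subseq_LIMSEQ[OF L2 sm2(2)] by (simp_all add: comp_def)
  have s_e: "(\<lambda>j. nu (Fs (2*j)) + 7*e/16) \<longlonglongrightarrow> s + 7*e/16" "(\<lambda>j. nu (Fs (2*j+1)) + 3*e/16) \<longlonglongrightarrow> s + 3*e/16"
    using LIMSEQ_subseq_LIMSEQ[OF s(1) sm2(1)] LIMSEQ_subseq_LIMSEQ[OF s(1) sm2(2)]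
    by (auto simp: comp_def intro!: tendsto_add)
  have "s + 7*e/16 \<le> L"
    by (rule LIMSEQ_le[OF s_e(1) L_e(1)]) (intro exI[of _ 0] allI impI less_imp_le even_ge, simp)
  moreover have "L \<le> s + 3*e/16"
    by (rule LIMSEQ_le[OF L_e(2) s_e(2)]) (intro exI[of _ 0] allI impI odd_le, simp)
  ultimately show False using e by linarith
qed

end


context dynsys begin

definition gen :: "(nat \<Rightarrow> nat \<Rightarrow> 'a set) \<Rightarrow> (nat \<Rightarrow> nat \<Rightarrow> nat) \<Rightarrow> 'a set \<Rightarrow> nat \<Rightarrow> nat \<Rightarrow> real" where
  "gen W p X i k = prob (pr (p i k) X \<inter> W i k) - prob (pr (p i k) X) * prob (W i k)"

definition unif :: "(nat \<Rightarrow> nat \<Rightarrow> real) \<Rightarrow> bool" where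
  "unif h \<longleftrightarrow> (\<forall>e>0. eventually (\<lambda>k. \<forall>i\<ge>1. \<bar>h i k\<bar> \<le> e) sequentially)"

lemma gen_empty[simp]: "gen W p {} i k = 0" by (simp add: gen_def)

lemma gen_compl:
  assumes "X \<in> sets M" "W i k \<in> sets M"
  shows "gen W p (space M - X) i k = - gen W p X i k"
proof -
  let ?P = "pr (p i k) X" and ?W = "W i k"
  have P: "?P \<in> sets M" using assms by blast
  have "(space M - ?P) \<inter> ?W = ?W - (?P \<inter> ?W)" using assms(2) sets.sets_into_space by blast
  then have e1: "prob ((space M - ?P) \<inter> ?W) = prob ?W - prob (?P \<inter> ?W)"
    using finite_measure_Diff[of ?W "?P \<inter> ?W"] P assms by auto
  have e2: "prob (space M - ?P) = 1 - prob ?P" using prob_compl[OF P] .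
  show ?thesis unfolding gen_def pr_compl e1 e2 by (simp add: algebra_simps)
qed

lemma gen_Un:
  assumes "X \<in> sets M" "Y \<in> sets M" "X \<inter> Y = {}" "W i k \<in> sets M"
  shows "gen W p (X \<union> Y) i k = gen W p X i k + gen W p Y i k"
proof -
  let ?P = "pr (p i k) X" and ?Q = "pr (p i k) Y" and ?W = "W i k"
  have d: "?P \<inter> ?Q = {}" using assms(3) by (auto simp: preim_def)
  have "prob ((?P \<union> ?Q) \<inter> ?W) = prob (?P \<inter> ?W) + prob (?Q \<inter> ?W)"
    using finite_measure_Union[of "?P \<inter> ?W" "?Q \<inter> ?W"] assms d by (auto simp: Int_Un_distrib2)
  moreover have "prob (?P \<union> ?Q) = prob ?P + prob ?Q" using finite_measure_Union assms d by blast
  ultimately show ?thesis unfolding gen_def pr_Un by (simp add: algebra_simps)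
qed

lemma gen_bound:
  assumes "X \<in> sets M" "W i k \<in> sets M"
  shows "\<bar>gen W p X i k\<bar> \<le> mu (p i k) X"
proof -
  let ?P = "pr (p i k) X" and ?W = "W i k"
  have "prob (?P \<inter> ?W) \<le> prob ?P" using assms by (intro finite_measure_mono) auto
  moreover have "prob ?P * prob ?W \<le> prob ?P"
    using mult_left_le[of "prob ?W" "prob ?P"] by simp
  moreover have "0 \<le> prob ?P * prob ?W" by simp
  moreover have "0 \<le> prob (?P \<inter> ?W)" by simp
  ultimately show ?thesis unfolding gen_def mu_def abs_le_iff by linarith
qed

lemma unif_add: "unif f \<Longrightarrow> unif g \<Longrightarrow> unif (\<lambda>i k. f i k + g i k)"
  unfolding unif_def
proof (intro allI impI)
  fix e :: real assume "e > 0" and f: "\<forall>e>0. eventually (\<lambda>k. \<forall>i\<ge>1. \<bar>f i k\<bar> \<le> e) sequentially"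
    and g: "\<forall>e>0. eventually (\<lambda>k. \<forall>i\<ge>1. \<bar>g i k\<bar> \<le> e) sequentially"
  then have "eventually (\<lambda>k. (\<forall>i\<ge>1. \<bar>f i k\<bar> \<le> e/2) \<and> (\<forall>i\<ge>1. \<bar>g i k\<bar> \<le> e/2)) sequentially"
    using half_gt_zero[OF \<open>e > 0\<close>] by (intro eventually_conj) blast+
  then show "eventually (\<lambda>k. \<forall>i\<ge>1. \<bar>f i k + g i k\<bar> \<le> e) sequentially"
    by eventually_elim (smt (verit) field_sum_of_halves)
qed

lemma unif_cong: "(\<And>i k. \<bar>f i k\<bar> = \<bar>g i k\<bar>) \<Longrightarrow> unif f \<Longrightarrow> unif g"
  unfolding unif_def by simp

lemma unif_Union:
  assumes conv: "\<And>X. X \<in> sets M \<Longrightarrow> convergent (\<lambda>n. mu n X)"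
    and WS: "\<And>i k. W i k \<in> sets M"
    and A: "disjoint_family (A :: nat \<Rightarrow> 'a set)" "range A \<subseteq> sets M" "\<And>n. unif (gen W p (A n))"
  shows "unif (gen W p (\<Union>n. A n))"
  unfolding unif_def
proof (intro allI impI)
  fix e :: real assume e: "e > 0"
  have As: "A n \<in> sets M" for n using A(2) by auto
  define U where "U N = (\<Union>n\<in>{..<N}. A n)" for N :: nat
  define C where "C N = (\<Union>n. A n) - U N" for N
  have Us: "U N \<in> sets M" for N unfolding U_def using As by auto
  have Cs: "C N \<in> sets M" for N unfolding C_def using As Us by auto
  have "decseq C" unfolding C_def U_def decseq_def by auto
  moreover have "(\<Inter>N. C N) = {}"
  proof -
    have "x \<notin> C (Suc n)" if "x \<in> A n" for x n using that unfolding C_def U_def by auto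
    then show ?thesis unfolding C_def by blast
  qed
  ultimately obtain N where N: "\<forall>n. mu n (C N) \<le> e/4"
    using uca[OF conv, where C=C and e="e/4"] Cs e by auto
  have uU: "unif (gen W p (U N'))" for N'
  proof (induction N')
    case 0 then show ?case by (simp add: U_def unif_def)
  next
    case (Suc N')
    have "U (Suc N') = U N' \<union> A N'" by (auto simp: U_def lessThan_Suc)
    moreover have "U N' \<inter> A N' = {}" using A(1) unfolding U_def disjoint_family_on_def by (metis (no_types, lifting) UN_E disjoint_iff lessThan_iff less_irrefl_nat UNIV_I)
    ultimately have "gen W p (U (Suc N')) = (\<lambda>i k. gen W p (U N') i k + gen W p (A N') i k)"
      by (auto intro!: ext gen_Un Us As WS)
    then show ?case using unif_add[OF Suc A(3)] by simp
  qed
  have "eventually (\<lambda>k. \<forall>i\<ge>1. \<bar>gen W p (U N) i k\<bar> \<le> e/2) sequentially"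
    using uU[of N] half_gt_zero[OF e] unfolding unif_def by blast
  then show "eventually (\<lambda>k. \<forall>i\<ge>1. \<bar>gen W p (\<Union>n. A n) i k\<bar> \<le> e) sequentially"
  proof eventually_elim
    case (elim k)
    show ?case
    proof (intro allI impI)
      fix i :: nat assume "1 \<le> i"
      have eqU: "(\<Union>n. A n) = U N \<union> C N" and dUC: "U N \<inter> C N = {}" unfolding C_def U_def by auto
      have g: "gen W p (\<Union>n. A n) i k = gen W p (U N) i k + gen W p (C N) i k"
        unfolding eqU by (rule gen_Un[OF Us Cs dUC WS])
      have b1: "\<bar>gen W p (C N) i k\<bar> \<le> mu (p i k) (C N)" by (rule gen_bound[OF Cs WS])
      have b2: "mu (p i k) (C N) \<le> e/4" using N by blast
      have b3: "\<bar>gen W p (U N) i k\<bar> \<le> e/2" using elim \<open>1 \<le> i\<close> by blast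
      have "\<bar>gen W p (\<Union>n. A n) i k\<bar> \<le> \<bar>gen W p (U N) i k\<bar> + \<bar>gen W p (C N) i k\<bar>"
        unfolding g by (rule abs_triangle_ineq)
      then show "\<bar>gen W p (\<Union>n. A n) i k\<bar> \<le> e" using b1 b2 b3 e by linarith
    qed
  qed
qed

lemma sup_iff:
  fixes h :: "nat \<Rightarrow> nat \<Rightarrow> real"
  assumes bd: "\<And>i k. \<bar>h i k\<bar> \<le> 1"
  shows "((\<lambda>k. SUP i\<in>{1..}. \<bar>h i k\<bar>) \<longlonglongrightarrow> 0) \<longleftrightarrow> unif h"
proof
  have bdd: "bdd_above ((\<lambda>i. \<bar>h i k\<bar>) ` {1..})" for k using bd by (intro bdd_aboveI2) auto
  {
    assume t: "(\<lambda>k. SUP i\<in>{1..}. \<bar>h i k\<bar>) \<longlonglongrightarrow> 0"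
    show "unif h" unfolding unif_def
    proof (intro allI impI)
      fix e :: real assume "e > 0"
      with t have "eventually (\<lambda>k. (SUP i\<in>{1..}. \<bar>h i k\<bar>) < e) sequentially"
        by (rule order_tendstoD(2))
      then show "eventually (\<lambda>k. \<forall>i\<ge>1. \<bar>h i k\<bar> \<le> e) sequentially"
      proof eventually_elim
        case (elim k)
        show ?case
        proof (intro allI impI)
          fix i :: nat assume "1 \<le> i"
          then have "\<bar>h i k\<bar> \<le> (SUP i\<in>{1..}. \<bar>h i k\<bar>)" by (intro cSUP_upper bdd) auto
          then show "\<bar>h i k\<bar> \<le> e" using elim by linarith
        qed
      qed
    qed
  }
  assume u: "unif h"
  show "(\<lambda>k. SUP i\<in>{1..}. \<bar>h i k\<bar>) \<longlonglongrightarrow> 0"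
  proof (rule order_tendstoI)
    fix a :: real assume "a < 0"
    have "\<bar>h 1 k\<bar> \<le> (SUP i\<in>{1..}. \<bar>h i k\<bar>)" for k by (intro cSUP_upper bdd) auto
    then show "eventually (\<lambda>k. a < (SUP i\<in>{1..}. \<bar>h i k\<bar>)) sequentially"
      using \<open>a < 0\<close> by (intro always_eventually allI) (smt (verit) abs_ge_zero)
  next
    fix a :: real assume "0 < a"
    then have "eventually (\<lambda>k. \<forall>i\<ge>1. \<bar>h i k\<bar> \<le> a/2) sequentially" using u half_gt_zero[OF \<open>0 < a\<close>] unfolding unif_def by blast
    then show "eventually (\<lambda>k. (SUP i\<in>{1..}. \<bar>h i k\<bar>) < a) sequentially"
    proof eventually_elim
      case (elim k)
      have "(SUP i\<in>{1..}. \<bar>h i k\<bar>) \<le> a/2" using elim by (intro cSUP_least) auto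
      then show ?case using \<open>0 < a\<close> by linarith
    qed
  qed
qed

end


context dynsys begin

lemma mix_A:
  assumes "A \<in> sets M" "B \<in> sets M"
  shows "mix_rel M S A B \<longleftrightarrow> unif (gen (\<lambda>i k. pr (i+k) B) (\<lambda>i k. i) A)"
proof -
  have eq: "(\<lambda>k. SUP i\<in>{1..}. \<bar>measure M (pr i A \<inter> pr k (pr i B)) - measure M (pr i A) * measure M (pr k (pr i B))\<bar>)
     = (\<lambda>k. SUP i\<in>{1..}. \<bar>gen (\<lambda>i k. pr (i+k) B) (\<lambda>i k. i) A i k\<bar>)"
    by (simp add: gen_def pr_pr)
  have bd: "\<bar>gen (\<lambda>i k. pr (i+k) B) (\<lambda>i k. i) A i k\<bar> \<le> 1" for i k
    using gen_bound[of A "\<lambda>i k. pr (i+k) B" i k "\<lambda>i k. i"] assms mu_le1 order_trans by blast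
  show ?thesis unfolding mix_rel_def eq by (rule sup_iff[OF bd])
qed

lemma mix_B:
  assumes "A \<in> sets M" "B \<in> sets M"
  shows "mix_rel M S A B \<longleftrightarrow> unif (gen (\<lambda>i k. pr i A) (\<lambda>i k. i+k) B)"
proof -
  have eq: "(\<lambda>k. SUP i\<in>{1..}. \<bar>measure M (pr i A \<inter> pr k (pr i B)) - measure M (pr i A) * measure M (pr k (pr i B))\<bar>)
     = (\<lambda>k. SUP i\<in>{1..}. \<bar>gen (\<lambda>i k. pr i A) (\<lambda>i k. i+k) B i k\<bar>)"
    by (simp add: gen_def pr_pr Int_commute mult.commute)
  have bd: "\<bar>gen (\<lambda>i k. pr i A) (\<lambda>i k. i+k) B i k\<bar> \<le> 1" for i k
    using gen_bound[of B "\<lambda>i k. pr i A" i k "\<lambda>i k. i+k"] assms mu_le1 order_trans by blast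
  show ?thesis unfolding mix_rel_def eq by (rule sup_iff[OF bd])
qed

lemma dynkin_unif:
  assumes conv: "\<And>X. X \<in> sets M \<Longrightarrow> convergent (\<lambda>n. mu n X)"
    and P: "Int_stable P" "P \<subseteq> sets M" "sets M = sigma_sets (space M) P"
    and WS: "\<And>i k. W i k \<in> sets M"
    and base: "\<And>A. A \<in> P \<Longrightarrow> unif (gen W p A)"
    and A: "A \<in> sets M"
  shows "unif (gen W p A)"
proof -
  have Ppow: "P \<subseteq> Pow (space M)" using P(2) sets.sets_into_space by blast
  have "A \<in> sigma_sets (space M) P" using A P(3) by simp
  from P(1) Ppow this show ?thesis
  proof (induction A rule: sigma_sets_induct_disjoint)
    case (basic A) then show ?case by (rule base)
  next
    case empty then show ?case by (simp add: unif_def)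
  next
    case (compl A)
    have "A \<in> sets M" using compl(1) P(3) by simp
    show ?case
    proof (rule unif_cong[OF _ compl(2)])
      show "\<bar>gen W p A i k\<bar> = \<bar>gen W p (space M - A) i k\<bar>" for i k
        using gen_compl[OF \<open>A \<in> sets M\<close> WS] by simp
    qed
  next
    case (union A)
    show ?case by (rule unif_Union[OF conv WS union(1) _ union(3)]) (use union(2) P(3) in auto)
  qed
qed

end

theorem lemma2p2:
  fixes M :: "'a measure" and S :: "'a \<Rightarrow> 'a" and P :: "'a set set"
  assumes "prob_space M"
    and "S \<in> M \<rightarrow>\<^sub>M M"
    and "asymptotically_stationary M S"
    and "Int_stable P" and "P \<subseteq> sets M"
    and "sets M = sigma_sets (space M) P"
    and "\<forall>A\<in>P. \<forall>B\<in>P. mix_rel M S A B"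
  shows "\<forall>A\<in>sets M. \<forall>B\<in>sets M. mix_rel M S A B"
proof -
  interpret dynsys M S using assms(1,2) by (intro dynsys.intro dynsys_axioms.intro)
  have conv: "convergent (\<lambda>n. mu n X)" if "X \<in> sets M" for X
    using assms(3) that unfolding asymptotically_stationary_def mu_def by auto
  have step1: "mix_rel M S A B" if A: "A \<in> sets M" and B: "B \<in> P" for A B
  proof -
    have Bs: "B \<in> sets M" using B assms(5) by blast
    have "unif (gen (\<lambda>i k. pr (i+k) B) (\<lambda>i k. i) A)"
    proof (rule dynkin_unif[OF conv assms(4,5,6) _ _ A])
      show "pr (i+k) B \<in> sets M" for i k using Bs by blast
      fix A' assume "A' \<in> P"
      then show "unif (gen (\<lambda>i k. pr (i+k) B) (\<lambda>i k. i) A')"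
        using mix_A[of A' B] assms(5,7) B Bs by blast
    qed
    then show ?thesis using mix_A[OF A Bs] by simp
  qed
  show ?thesis
  proof (intro ballI)
    fix A B assume A: "A \<in> sets M" and B: "B \<in> sets M"
    have "unif (gen (\<lambda>i k. pr i A) (\<lambda>i k. i+k) B)"
    proof (rule dynkin_unif[OF conv assms(4,5,6) _ _ B])
      show "pr i A \<in> sets M" for i k using A by blast
      fix B' assume "B' \<in> P"
      then show "unif (gen (\<lambda>i k. pr i A) (\<lambda>i k. i+k) B')"
        using mix_B[of A B'] step1[OF A] assms(5) A by blast
    qed
    then show "mix_rel M S A B" using mix_B[OF A B] by simp
  qed
qed

end
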